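(* Let $R$ be a ring with unity and involution $*$, let $a\in R$ and let $m$ be a nonnegative integer. Then $a$ is left dual core invertible if and only if $a$ is left dual $a^m$-core invertible.
   Context: Here $a^0=1$. An element $a$ is left dual core invertible if there exists $x\in R$ with $axa=a$, $(xa)^*=xa$ and $x^2a=x$. For $v\in R$, $a$ is left dual $v$-core invertible if there exists $x\in R$ with $axva=a$, $(xva)^*=xva$ and $x^2va=x$. *)

theory Defs
  imports Main
begin

class ring_1_inv = ring_1 +
  fixes inv_star :: "'a \<Rightarrow> 'a"
  assumes inv_star_inv: "inv_star (inv_star x) = x"
    and inv_star_add: "inv_star (x + y) = inv_star x + inv_star y"
    and inv_star_mult: "inv_star (x * y) = inv_star y * inv_star x"

definition left_dual_core_invertible :: "'a::ring_1_inv \<Rightarrow> bool" where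
  "left_dual_core_invertible a \<longleftrightarrow>
     (\<exists>x. a * x * a = a \<and> inv_star (x * a) = x * a \<and> x ^ 2 * a = x)"

definition left_dual_v_core_invertible :: "'a::ring_1_inv \<Rightarrow> 'a \<Rightarrow> bool" where
  "left_dual_v_core_invertible v a \<longleftrightarrow>
     (\<exists>x. a * x * v * a = a \<and> inv_star (x * v * a) = x * v * a \<and> x ^ 2 * v * a = x)"

end

theory Submission
  imports Defs
begin

lemma pow_lem:
  fixes x a :: "'a::ring_1"
  assumes h: "x * x * a = x"
  shows "x ^ Suc k * a ^ Suc k = x * a"
proof (induction k)
  case 0 then show ?case by simp
next
  case (Suc k)
  have "x ^ Suc (Suc k) * a ^ Suc (Suc k) = x ^ k * (x * x * a) * a ^ Suc k"
    by (simp only: power_Suc2[of x "Suc k"] power_Suc2[of x k] power_Suc[of a "Suc k"] mult.assoc)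
  also have "\<dots> = x ^ Suc k * a ^ Suc k" using h by (simp add: power_Suc2 power_commutes)
  finally show ?case using Suc by simp
qed

lemma pow_lem2:
  fixes y a :: "'a::ring_1"
  assumes h: "a * p = a" and "m \<ge> 1"
  shows "a ^ m * p = a ^ m"
proof -
  obtain k where "m = Suc k" using assms(2) by (cases m) auto
  then show ?thesis using h by (simp only: power_Suc2 mult.assoc)
qed

theorem corollary3p5:
  fixes a :: "'a::ring_1_inv" and m :: nat
  shows "left_dual_core_invertible a \<longleftrightarrow> left_dual_v_core_invertible (a ^ m) a"
proof
  assume "left_dual_core_invertible a"
  then obtain x where h1: "a * x * a = a" and h2: "inv_star (x * a) = x * a" and h3: "x ^ 2 * a = x"
    unfolding left_dual_core_invertible_def by blast
  have h3': "x * x * a = x" using h3 by (simp add: power2_eq_square)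
  have P: "x ^ Suc m * a ^ m * a = x * a"
    using pow_lem[OF h3', of m] by (simp add: power_Suc2 mult.assoc power_commutes)
  show "left_dual_v_core_invertible (a ^ m) a"
    unfolding left_dual_v_core_invertible_def
  proof (intro exI conjI)
    show "a * x ^ Suc m * a ^ m * a = a" using P h1 by (simp add: mult.assoc)
    show "inv_star (x ^ Suc m * a ^ m * a) = x ^ Suc m * a ^ m * a" using P h2 by simp
    have "(x ^ Suc m) ^ 2 * a ^ m * a = x ^ Suc m * (x ^ Suc m * a ^ m * a)"
      by (simp add: power2_eq_square mult.assoc)
    also have "\<dots> = x ^ Suc m * (x * a)" using P by simp
    also have "\<dots> = x ^ m * (x * x * a)" by (simp only: power_Suc2 mult.assoc)
    also have "\<dots> = x ^ Suc m" using h3' by (simp only: power_Suc2)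
    finally show "(x ^ Suc m) ^ 2 * a ^ m * a = x ^ Suc m" .
  qed
next
  assume "left_dual_v_core_invertible (a ^ m) a"
  then obtain y where h1: "a * y * a ^ m * a = a" and h2: "inv_star (y * a ^ m * a) = y * a ^ m * a"
      and h3: "y ^ 2 * a ^ m * a = y"
    unfolding left_dual_v_core_invertible_def by blast
  show "left_dual_core_invertible a"
    unfolding left_dual_core_invertible_def
  proof (intro exI conjI)
    show "a * (y * a ^ m) * a = a" using h1 by (simp add: mult.assoc)
    show "inv_star (y * a ^ m * a) = y * a ^ m * a" using h2 .
    show "(y * a ^ m) ^ 2 * a = y * a ^ m"
    proof (cases "m = 0")
      case True then show ?thesis using h3 by simp
    next
      case False
      have ap: "a * (y * a ^ m * a) = a" using h1 by (simp add: mult.assoc)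
      have "a ^ m * (y * a ^ m * a) = a ^ m" using pow_lem2[OF ap] False by simp
      have "(y * a ^ m) ^ 2 * a = y * (a ^ m * (y * a ^ m * a))"
        by (simp add: power2_eq_square mult.assoc)
      also have "\<dots> = y * a ^ m" using \<open>a ^ m * (y * a ^ m * a) = a ^ m\<close> by simp
      finally show ?thesis .
    qed
  qed
qed

end
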